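(* Let $\psi$ be a Dirichlet character modulo $q$. For any positive integer $n$ and $\Re(\xi) > 0$, we have \begin{equation*} \frac{\sigma_{\xi}(n, \psi)}{n^{\xi}} = \frac{L(1+\xi, \overline{\psi})}{\tau(\overline{\psi})} \sum_{\ell = 1}^{\infty} \frac{1}{\ell^{1+\xi}} \sum_{\substack{h \bmod{\ell q} \\ (h, \ell q) = 1}} \overline{\psi}(h) e_{\ell q}(hn). \end{equation*}
   Context: Here $\sigma_{\xi}(n, \psi) = \sum_{d \mid n} \psi(d) d^{\xi}$ is the twisted divisor function, $\tau(\overline{\psi}) = \sum_{a \bmod q} \overline{\psi}(a) e_{q}(a)$ is the Gauss sum, $e_{p}(z) = \exp(2\pi i z/p)$, $L(s,\overline{\psi})$ is the Dirichlet $L$-function of $\overline{\psi}$, and the inner sum runs over reduced residues $h$ modulo $\ell q$. *)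

theory Defs
  imports "HOL-Analysis.Analysis"
begin

definition dirichlet_char :: "nat \<Rightarrow> (nat \<Rightarrow> complex) \<Rightarrow> bool" where
  "dirichlet_char q \<phi> \<longleftrightarrow> q > 0 \<and>
     (\<forall>m n. \<phi> (m * n) = \<phi> m * \<phi> n) \<and>
     (\<forall>n. \<phi> (n + q) = \<phi> n) \<and>
     (\<forall>n. \<phi> n = 0 \<longleftrightarrow> \<not> coprime n q)"

text \<open>Primitive: not induced by a character of any smaller modulus d dividing q.\<close>
definition primitive_dirichlet_char :: "nat \<Rightarrow> (nat \<Rightarrow> complex) \<Rightarrow> bool" where
  "primitive_dirichlet_char q \<phi> \<longleftrightarrow> dirichlet_char q \<phi> \<and>
     (\<forall>d. d dvd q \<and> d < q \<longrightarrow>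
        (\<exists>a. coprime a q \<and> a mod d = 1 mod d \<and> \<phi> a \<noteq> 1))"

definition e_mod :: "nat \<Rightarrow> complex \<Rightarrow> complex" where
  "e_mod p z = exp (2 * of_real pi * \<i> * z / of_nat p)"

definition gauss_sum :: "nat \<Rightarrow> (nat \<Rightarrow> complex) \<Rightarrow> complex" where
  "gauss_sum q \<phi> = (\<Sum>a<q. \<phi> a * e_mod q (of_nat a))"

definition twisted_sigma :: "complex \<Rightarrow> nat \<Rightarrow> (nat \<Rightarrow> complex) \<Rightarrow> complex" where
  "twisted_sigma \<xi> n \<psi> = (\<Sum>d\<in>{d. d dvd n}. \<psi> d * of_nat d powr \<xi>)"

text \<open>Dirichlet L-function L(s,chi) = sum_{n>=1} chi(n) n^{-s} (used for Re s > 1).\<close>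
definition dirichlet_L :: "(nat \<Rightarrow> complex) \<Rightarrow> complex \<Rightarrow> complex" where
  "dirichlet_L \<phi> s = (\<Sum>n. \<phi> (Suc n) / of_nat (Suc n) powr s)"

end

theory Submission
  imports Defs "HOL-Number_Theory.Number_Theory" "HOL-Computational_Algebra.Squarefree"
begin

no_notation Infinite_Sum.abs_summable_on (infixr \<open>abs'_summable'_on\<close> 46)


lemma e_mod_add: "e_mod p (a + b) = e_mod p a * e_mod p b"
  unfolding e_mod_def by (simp add: add_divide_distrib distrib_left exp_add)

lemma e_mod_period:
  assumes "p > 0"
  shows "e_mod p (of_nat (a + p * k)) = e_mod p (of_nat a)"
proof -
  have "e_mod p (of_nat (p * k)) = exp (of_nat k * (2 * of_real pi * \<i>))"
    unfolding e_mod_def using assms by (simp add: field_simps)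
  also have "\<dots> = 1" by (simp add: exp_of_nat_mult)
  finally show ?thesis by (simp add: e_mod_add)
qed

lemma e_mod_mod:
  assumes "p > 0"
  shows "e_mod p (of_nat (a mod p)) = e_mod p (of_nat a)"
  using e_mod_period[OF assms, of "a mod p" "a div p"] by simp

lemma e_mod_scale:
  assumes "e > 0"
  shows "e_mod (e * m) (of_nat (e * x)) = e_mod m (of_nat x)"
  unfolding e_mod_def using assms by (simp add: mult_divide_mult_cancel_left ac_simps)

lemma e_mod_power: "e_mod p (of_nat (j * k)) = e_mod p (of_nat j) ^ k"
proof -
  have "e_mod p (of_nat (j * k)) = exp (of_nat k * (2 * of_real pi * \<i> * of_nat j / of_nat p))"
    unfolding e_mod_def by (simp add: algebra_simps)
  also have "\<dots> = e_mod p (of_nat j) ^ k" by (simp only: exp_of_nat_mult e_mod_def)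
  finally show ?thesis .
qed

lemma e_mod_eq_1:
  assumes "p > 0"
  shows "e_mod p (of_nat j) = 1 \<longleftrightarrow> p dvd j"
proof
  assume "p dvd j"
  then obtain k where "j = p * k" by auto
  thus "e_mod p (of_nat j) = 1" using e_mod_period[OF assms, of 0 k] by (simp add: e_mod_def)
next
  assume "e_mod p (of_nat j) = 1"
  then obtain n :: int where n: "Im (2 * of_real pi * \<i> * of_nat j / of_nat p) = of_int (2 * n) * pi"
    unfolding e_mod_def exp_eq_1 by blast
  have "2 * pi * real j / real p = 2 * real_of_int n * pi" using n by simp
  hence "real j = real_of_int n * real p" using assms pi_gt_zero by (simp add: field_simps)
  hence "int j = n * int p" by (metis of_int_eq_iff of_int_mult of_int_of_nat_eq)
  thus "p dvd j" by (metis dvd_triv_right int_dvd_int_iff)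
qed

lemma e_mod_orth:
  assumes "p > 0"
  shows "(\<Sum>k<p. e_mod p (of_nat (j * k))) = (if p dvd j then of_nat p else 0)"
proof (cases "p dvd j")
  case True
  then obtain m where "j = p * m" by auto
  hence "e_mod p (of_nat (j * k)) = 1" for k
    using e_mod_eq_1[OF assms, of "j * k"] by simp
  thus ?thesis using True by simp
next
  case False
  define r where "r = e_mod p (of_nat j)"
  have r1: "r \<noteq> 1" using False e_mod_eq_1[OF assms] r_def by simp
  have rp: "r ^ p = 1" using e_mod_power[of p j p] e_mod_eq_1[OF assms, of "j * p"] r_def by simp
  have "(\<Sum>k<p. e_mod p (of_nat (j * k))) = (\<Sum>k<p. r ^ k)"
    by (rule sum.cong[OF refl]) (simp only: e_mod_power r_def)
  also have "\<dots> = 0" using r1 rp by (simp add: sum_gp_strict)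
  finally show ?thesis using False by simp
qed


lemma dc_props:
  assumes "dirichlet_char q c"
  shows "q > 0" "c (m * n) = c m * c n" "c (n + q) = c n" "c n = 0 \<longleftrightarrow> \<not> coprime n q"
  using assms unfolding dirichlet_char_def by auto

lemma dc_periodic:
  assumes "dirichlet_char q c"
  shows "c (n + q * k) = c n"
proof (induction k)
  case (Suc k)
  have "c (n + q * Suc k) = c ((n + q * k) + q)" by (simp add: algebra_simps)
  also have "\<dots> = c (n + q * k)" using dc_props(3)[OF assms] by blast
  finally show ?case using Suc by simp
qed simp

lemma dc_mod:
  assumes "dirichlet_char q c"
  shows "c (n mod q) = c n"
  using dc_periodic[OF assms, of "n mod q" "n div q"] by simp

lemma dc_1:
  assumes "dirichlet_char q c"
  shows "c 1 = 1"
proof -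
  have "c 1 = c 1 * c 1" using dc_props(2)[OF assms, of 1 1] by simp
  moreover have "c 1 \<noteq> 0" using dc_props(4)[OF assms, of 1] by simp
  ultimately show ?thesis by (metis mult_cancel_left2)
qed

lemma dc_power:
  assumes "dirichlet_char q c"
  shows "c (n ^ k) = c n ^ k"
proof (induction k)
  case 0 show ?case using dc_1[OF assms] by (simp only: power_0)
next
  case (Suc k) thus ?case by (simp add: dc_props(2)[OF assms])
qed

lemma dc_norm_coprime:
  assumes "dirichlet_char q c" "coprime n q"
  shows "norm (c n) = 1"
proof -
  have q: "q > 0" using dc_props(1)[OF assms(1)] .
  have "[n ^ totient q = 1] (mod q)" using euler_theorem assms(2) by blast
  hence m: "(n ^ totient q) mod q = 1 mod q" unfolding cong_def .
  have "c (n ^ totient q) = c ((n ^ totient q) mod q)" by (simp only: dc_mod[OF assms(1)])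
  also have "\<dots> = c (1 mod q)" by (simp only: m)
  also have "\<dots> = 1" by (simp only: dc_mod[OF assms(1)] dc_1[OF assms(1)])
  finally have "c n ^ totient q = 1" using dc_power[OF assms(1)] by simp
  hence "norm (c n ^ totient q) = 1" by simp
  hence "norm (c n) ^ totient q = 1 ^ totient q" by (simp add: norm_power)
  moreover have "totient q > 0" using q by simp
  ultimately show ?thesis
    using power_eq_imp_eq_base[of "norm (c n)" "totient q" 1] by simp
qed

lemma dc_norm_le:
  assumes "dirichlet_char q c"
  shows "norm (c n) \<le> 1"
  using dc_norm_coprime[OF assms, of n] dc_props(4)[OF assms, of n] by (cases "coprime n q") auto

lemma dc_cnj_mult:
  assumes "dirichlet_char q c" "coprime n q"
  shows "cnj (c n) * c n = 1"
proof -
  have "cnj (c n) * c n = of_real ((norm (c n))\<^sup>2)"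
    by (metis complex_norm_square mult.commute of_real_power)
  thus ?thesis using dc_norm_coprime[OF assms] by simp
qed

lemma dc_cnj:
  assumes "dirichlet_char q \<psi>"
  shows "dirichlet_char q (\<lambda>m. cnj (\<psi> m))"
  using assms unfolding dirichlet_char_def by auto

lemma primitive_cnj:
  assumes "primitive_dirichlet_char q \<psi>"
  shows "primitive_dirichlet_char q (\<lambda>m. cnj (\<psi> m))"
  unfolding primitive_dirichlet_char_def
proof (intro conjI allI impI)
  show "dirichlet_char q (\<lambda>m. cnj (\<psi> m))"
    using assms dc_cnj unfolding primitive_dirichlet_char_def by blast
next
  fix d assume "d dvd q \<and> d < q"
  then obtain a where a: "coprime a q" "a mod d = 1 mod d" "\<psi> a \<noteq> 1"
    using assms unfolding primitive_dirichlet_char_def by blast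
  have "cnj (\<psi> a) \<noteq> 1"
  proof
    assume "cnj (\<psi> a) = 1"
    hence "cnj (cnj (\<psi> a)) = cnj 1" by simp
    thus False using a(3) by simp
  qed
  thus "\<exists>a. coprime a q \<and> a mod d = 1 mod d \<and> cnj (\<psi> a) \<noteq> 1" using a by blast
qed

lemma perm_mult_mod:
  fixes b q :: nat
  assumes "coprime b q" "q > 0"
  shows "bij_betw (\<lambda>a. a * b mod q) {..<q} {..<q}"
proof -
  have inj: "inj_on (\<lambda>a. a * b mod q) {..<q}"
  proof (rule inj_onI)
    fix x y assume xy: "x \<in> {..<q}" "y \<in> {..<q}" "x * b mod q = y * b mod q"
    have "[x * b = y * b] (mod q)" using xy(3) unfolding cong_def .
    hence "[x = y] (mod q)" using cong_mult_rcancel_nat assms(1) by blast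
    thus "x = y" using xy by (simp add: cong_def)
  qed
  have "(\<lambda>a. a * b mod q) ` {..<q} \<subseteq> {..<q}" using assms(2) by auto
  hence "(\<lambda>a. a * b mod q) ` {..<q} = {..<q}" using endo_inj_surj inj by blast
  thus ?thesis using inj unfolding bij_betw_def by blast
qed

lemma e_mod_mod_mult:
  assumes "q > 0"
  shows "e_mod q (of_nat ((x mod q) * k)) = e_mod q (of_nat (x * k))"
  by (metis assms e_mod_mod mod_mult_left_eq)

lemma gauss_separable:
  assumes prim: "primitive_dirichlet_char q c"
  shows "(\<Sum>a<q. c a * e_mod q (of_nat (a * k))) = cnj (c k) * gauss_sum q c"
proof -
  have dc: "dirichlet_char q c" using prim unfolding primitive_dirichlet_char_def by blast
  have q: "q > 0" using dc_props(1)[OF dc] .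
  define S where "S = (\<Sum>a<q. c a * e_mod q (of_nat (a * k)))"
  show ?thesis
  proof (cases "coprime k q")
    case True
    have "c k * S = (\<Sum>a<q. c (a * k mod q) * e_mod q (of_nat (a * k mod q)))"
      unfolding S_def sum_distrib_left
    proof (rule sum.cong[OF refl])
      fix a
      have "c (a * k mod q) = c a * c k" by (simp only: dc_mod[OF dc] dc_props(2)[OF dc])
      moreover have "e_mod q (of_nat (a * k mod q)) = e_mod q (of_nat (a * k))" by (rule e_mod_mod[OF q])
      ultimately show "c k * (c a * e_mod q (of_nat (a * k))) = c (a * k mod q) * e_mod q (of_nat (a * k mod q))"
        by (simp only: ac_simps)
    qed
    also have "\<dots> = (\<Sum>b<q. c b * e_mod q (of_nat b))"
      using sum.reindex_bij_betw[OF perm_mult_mod[OF True q], of "\<lambda>b. c b * e_mod q (of_nat b)"]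
      by simp
    also have "\<dots> = gauss_sum q c" unfolding gauss_sum_def ..
    finally have "c k * S = gauss_sum q c" .
    hence "cnj (c k) * (c k * S) = cnj (c k) * gauss_sum q c" by simp
    thus ?thesis using dc_cnj_mult[OF dc True] unfolding S_def by (simp add: mult.assoc[symmetric])
  next
    case False
    define g where "g = gcd k q"
    define d where "d = q div g"
    have g1: "g \<noteq> 1" using False coprime_iff_gcd_eq_1 unfolding g_def by blast
    have g0: "g > 0" using q unfolding g_def by simp
    have qdg: "q = d * g" unfolding d_def g_def by simp
    have ddvd: "d dvd q" using qdg by simp
    have dlt: "d < q" unfolding d_def using g1 g0 q by (intro div_less_dividend) auto
    have "\<forall>d. d dvd q \<and> d < q \<longrightarrow> (\<exists>a. coprime a q \<and> a mod d = 1 mod d \<and> c a \<noteq> 1)"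
      using prim unfolding primitive_dirichlet_char_def by (elim conjE)
    hence "\<exists>a. coprime a q \<and> a mod d = 1 mod d \<and> c a \<noteq> 1" using ddvd dlt by blast
    then obtain b where b: "coprime b q" "b mod d = 1 mod d" "c b \<noteq> 1" by blast
    have "g dvd k" unfolding g_def by simp
    then obtain k' where k': "k = g * k'" by (rule dvdE)
    have e: "e_mod q (of_nat (a * b mod q * k)) = e_mod q (of_nat (a * k))" for a
    proof -
      have "a * b mod d = a * (b mod d) mod d" by (simp add: mod_mult_right_eq)
      also have "\<dots> = a * (1 mod d) mod d" using b(2) by simp
      also have "\<dots> = a mod d" by (simp add: mod_mult_right_eq)
      finally have ab: "a * b mod d = a mod d" .
      have "(a * b * g) mod q = (a * b mod d) * g" unfolding qdg by (rule mult_mod_left[symmetric])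
      also have "\<dots> = (a mod d) * g" using ab by simp
      also have "\<dots> = (a * g) mod q" unfolding qdg by (rule mult_mod_left)
      finally have "(a * b * g) mod q = (a * g) mod q" .
      hence eq: "(a * b * g) mod q = (a * g) mod q" .
      have "(a * b * g) * k' mod q = ((a * b * g) mod q) * k' mod q" by (simp only: mod_mult_left_eq)
      also have "\<dots> = ((a * g) mod q) * k' mod q" by (simp only: eq)
      also have "\<dots> = (a * g) * k' mod q" by (simp only: mod_mult_left_eq)
      finally have "(a * b * g) * k' mod q = (a * g) * k' mod q" .
      hence "(a * b * k) mod q = (a * k) mod q" unfolding k' by (simp add: ac_simps)
      hence "e_mod q (of_nat ((a * b * k) mod q)) = e_mod q (of_nat ((a * k) mod q))" by simp
      hence "e_mod q (of_nat (a * b * k)) = e_mod q (of_nat (a * k))" by (simp only: e_mod_mod[OF q])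
      moreover have "e_mod q (of_nat (a * b mod q * k)) = e_mod q (of_nat (a * b * k))"
        by (rule e_mod_mod_mult[OF q])
      ultimately show ?thesis by simp
    qed
    have "S = (\<Sum>a<q. c (a * b mod q) * e_mod q (of_nat (a * b mod q * k)))"
      unfolding S_def
      using sum.reindex_bij_betw[OF perm_mult_mod[OF b(1) q], of "\<lambda>a. c a * e_mod q (of_nat (a * k))"]
      by simp
    also have "\<dots> = c b * S"
      unfolding S_def sum_distrib_left
    proof (rule sum.cong[OF refl])
      fix a
      have "c (a * b mod q) = c a * c b" by (simp only: dc_mod[OF dc] dc_props(2)[OF dc])
      thus "c (a * b mod q) * e_mod q (of_nat (a * b mod q * k)) = c b * (c a * e_mod q (of_nat (a * k)))"
        unfolding e by (simp add: ac_simps)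
    qed
    finally have "(1 - c b) * S = 0" by (simp add: algebra_simps)
    hence "S = 0" using b(3) by simp
    moreover have "c k = 0" using dc_props(4)[OF dc] False by simp
    ultimately show ?thesis unfolding S_def by simp
  qed
qed

lemma gauss_nonzero:
  assumes prim: "primitive_dirichlet_char q c"
  shows "gauss_sum q c \<noteq> 0"
proof
  assume t0: "gauss_sum q c = 0"
  have dc: "dirichlet_char q c" using prim unfolding primitive_dirichlet_char_def by blast
  have q: "q > 0" using dc_props(1)[OF dc] .
  have "(\<Sum>k<q. e_mod q (of_nat (k * (q - 1))) * (\<Sum>a<q. c a * e_mod q (of_nat (a * k)))) = 0"
  proof -
    have "(\<Sum>a<q. c a * e_mod q (of_nat (a * k))) = 0" for k
      using gauss_separable[OF prim, of k] t0 by simp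
    thus ?thesis by simp
  qed
  moreover have "(\<Sum>k<q. e_mod q (of_nat (k * (q - 1))) * (\<Sum>a<q. c a * e_mod q (of_nat (a * k))))
      = (\<Sum>a<q. c a * (\<Sum>k<q. e_mod q (of_nat ((a + (q - 1)) * k))))"
  proof -
    have *: "e_mod q (of_nat (k * (q - 1))) * (c a * e_mod q (of_nat (a * k)))
        = c a * e_mod q (of_nat ((a + (q - 1)) * k))" for a k
    proof -
      have "(a + (q - 1)) * k = a * k + k * (q - 1)" by (simp only: add_mult_distrib mult.commute[of "q - 1"])
      hence "e_mod q (of_nat ((a + (q - 1)) * k)) = e_mod q (of_nat (a * k)) * e_mod q (of_nat (k * (q - 1)))"
        by (simp only: of_nat_add e_mod_add)
      thus ?thesis by simp
    qed
    show ?thesis unfolding sum_distrib_left * by (rule sum.swap)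
  qed
  moreover have "(\<Sum>a<q. c a * (\<Sum>k<q. e_mod q (of_nat ((a + (q - 1)) * k))))
      = (\<Sum>a<q. if a = 1 mod q then c a * of_nat q else 0)"
  proof (rule sum.cong[OF refl])
    fix a assume a: "a \<in> {..<q}"
    have iff: "q dvd (a + (q - 1)) \<longleftrightarrow> a = 1 mod q"
    proof (cases "q = 1")
      case True thus ?thesis using a by simp
    next
      case False
      hence q2: "q \<ge> 2" using q by simp
      show ?thesis
      proof (cases a)
        case 0
        have "\<not> q dvd (q - 1)" using q2 by (auto dest: dvd_imp_le)
        thus ?thesis using 0 q2 by simp
      next
        case (Suc a')
        have "a + (q - 1) = a' + q" using Suc q by simp
        hence "q dvd (a + (q - 1)) \<longleftrightarrow> q dvd a'" by simp
        also have "\<dots> \<longleftrightarrow> a' = 0" using a Suc by (auto dest: dvd_imp_le)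
        finally show ?thesis using Suc q2 by simp
      qed
    qed
    show "c a * (\<Sum>k<q. e_mod q (of_nat ((a + (q - 1)) * k))) = (if a = 1 mod q then c a * of_nat q else 0)"
    proof -
      have o: "(\<Sum>k<q. e_mod q (of_nat ((a + (q - 1)) * k))) = (if q dvd (a + (q - 1)) then of_nat q else 0)"
        by (rule e_mod_orth[OF q])
      show ?thesis unfolding o iff by simp
    qed
  qed
  moreover have "(\<Sum>a<q. if a = 1 mod q then c a * of_nat q else 0) = c (1 mod q) * of_nat q"
    using q by (simp add: sum.delta')
  moreover have "c (1 mod q) = 1" by (simp only: dc_mod[OF dc] dc_1[OF dc])
  ultimately show False using q by simp
qed


definition Fs :: "nat \<Rightarrow> (nat \<Rightarrow> complex) \<Rightarrow> nat \<Rightarrow> nat \<Rightarrow> complex" where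
  "Fs q c n l = (\<Sum>h<l * q. c h * e_mod (l * q) (of_nat (h * n)))"

lemma sum_split_blocks:
  fixes g :: "nat \<Rightarrow> 'a::comm_monoid_add"
  shows "(\<Sum>h<l * q. g h) = (\<Sum>b<l. \<Sum>a<q. g (b * q + a))"
proof -
  have "(\<Sum>h<l * q. g h) = (\<Sum>b<l. sum g {b * q..<b * q + q})"
    by (rule sum.nat_group[symmetric])
  also have "\<dots> = (\<Sum>b<l. \<Sum>a<q. g (b * q + a))"
  proof (rule sum.cong[OF refl])
    fix b
    have "sum g {0 + b * q..<q + b * q} = (\<Sum>a = 0..<q. g (a + b * q))"
      by (rule sum.shift_bounds_nat_ivl)
    thus "sum g {b * q..<b * q + q} = (\<Sum>a<q. g (b * q + a))"
      by (simp add: atLeast0LessThan add.commute)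
  qed
  finally show ?thesis .
qed

lemma F_formula:
  assumes prim: "primitive_dirichlet_char q c" and l: "l > 0"
  shows "Fs q c n l = (if l dvd n then gauss_sum q c * of_nat l * cnj (c (n div l)) else 0)"
proof -
  have dc: "dirichlet_char q c" using prim unfolding primitive_dirichlet_char_def by blast
  have q: "q > 0" using dc_props(1)[OF dc] .
  have trm: "c (b * q + a) * e_mod (l * q) (of_nat ((b * q + a) * n))
      = (c a * e_mod (l * q) (of_nat (a * n))) * e_mod l (of_nat (n * b))" for a b
  proof -
    have c1: "c (b * q + a) = c a" using dc_periodic[OF dc, of a b] by (simp add: ac_simps)
    have "e_mod (l * q) (of_nat ((b * q + a) * n))
        = e_mod (l * q) (of_nat (a * n)) * e_mod (l * q) (of_nat (q * (n * b)))"
    proof -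
      have "(b * q + a) * n = a * n + q * (n * b)" by (simp add: algebra_simps)
      thus ?thesis by (simp only: of_nat_add e_mod_add)
    qed
    also have "e_mod (l * q) (of_nat (q * (n * b))) = e_mod l (of_nat (n * b))"
      using e_mod_scale[OF q, of l "n * b"] by (simp add: mult.commute)
    finally show ?thesis using c1 by simp
  qed
  have "Fs q c n l = (\<Sum>b<l. \<Sum>a<q. (c a * e_mod (l * q) (of_nat (a * n))) * e_mod l (of_nat (n * b)))"
    unfolding Fs_def sum_split_blocks using trm by simp
  also have "\<dots> = (\<Sum>a<q. c a * e_mod (l * q) (of_nat (a * n))) * (\<Sum>b<l. e_mod l (of_nat (n * b)))"
    by (simp add: sum_product sum.swap[of _ "{..<l}"])
  also have "(\<Sum>b<l. e_mod l (of_nat (n * b))) = (if l dvd n then of_nat l else 0)"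
    by (rule e_mod_orth[OF l])
  finally have F: "Fs q c n l = (\<Sum>a<q. c a * e_mod (l * q) (of_nat (a * n))) * (if l dvd n then of_nat l else 0)" .
  show ?thesis
  proof (cases "l dvd n")
    case False thus ?thesis using F by simp
  next
    case True
    then obtain m where m: "n = l * m" by auto
    have "(\<Sum>a<q. c a * e_mod (l * q) (of_nat (a * n))) = (\<Sum>a<q. c a * e_mod q (of_nat (a * m)))"
    proof (rule sum.cong[OF refl])
      fix a
      have "e_mod (l * q) (of_nat (l * (a * m))) = e_mod q (of_nat (a * m))" by (rule e_mod_scale[OF l])
      thus "c a * e_mod (l * q) (of_nat (a * n)) = c a * e_mod q (of_nat (a * m))"
        unfolding m by (simp add: ac_simps)
    qed
    also have "\<dots> = cnj (c m) * gauss_sum q c" by (rule gauss_separable[OF prim])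
    finally show ?thesis using F True m l by simp
  qed
qed


definition moeb :: "nat \<Rightarrow> int" where
  "moeb d = (if squarefree d then (-1) ^ card (prime_factors d) else 0)"

lemma moeb_abs_le: "\<bar>moeb d\<bar> \<le> 1"
  unfolding moeb_def by (simp add: power_abs)

lemma prod_primes_props:
  fixes X :: "nat set"
  assumes X: "X \<subseteq> prime_factors m" and m: "m > 0"
  shows "prime_factors (\<Prod>X) = X" "squarefree (\<Prod>X)" "(\<Prod>X) dvd m"
proof -
  have fin: "finite X" using X finite_subset by blast
  have pr: "\<And>p. p \<in> X \<Longrightarrow> prime p" using X by auto
  have "0 \<notin> id ` X" using pr[of 0] by auto
  hence "prime_factors (prod id X) = \<Union>((prime_factors \<circ> id) ` X)"
    using prime_factors_prod[OF fin] by blast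
  also have "\<dots> = X" using pr by (auto simp: prime_prime_factors)
  finally show "prime_factors (\<Prod>X) = X" by simp
  show "squarefree (\<Prod>X)"
    using squarefree_prod_coprime[of X id] pr by (simp add: primes_coprime squarefree_prime)
  show "(\<Prod>X) dvd m"
    using fin X
  proof (induction X rule: finite_induct)
    case empty thus ?case by simp
  next
    case (insert p X)
    have "prime p" "p dvd m" using insert.prems by auto
    moreover have "(\<Prod>X) dvd m" using insert by auto
    moreover have "coprime p (\<Prod>X)"
      using insert.prems insert.hyps(2) by (intro prod_coprime_right) (auto intro: primes_coprime)
    ultimately show ?case using insert.hyps by (simp add: divides_mult)
  qed
qed

lemma sqf_prod_prime_factors:
  fixes d :: nat
  assumes "squarefree d"
  shows "\<Prod>(prime_factors d) = d"
proof -
  have d0: "d \<noteq> 0" using assms by (cases d) auto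
  have "(\<Prod>p \<in> prime_factors d. p ^ multiplicity p d) = d"
    using prod_prime_factors[OF d0] by simp
  moreover have "multiplicity p d = 1" if "p \<in> prime_factors d" for p
    using squarefree_factorial_semiring'[OF d0] assms that by blast
  ultimately show ?thesis by simp
qed

lemma sqf_divisors_bij:
  fixes m :: nat
  assumes m: "m > 0"
  shows "bij_betw (\<lambda>X. \<Prod>X) (Pow (prime_factors m)) {d. d dvd m \<and> squarefree d}"
  unfolding bij_betw_def
proof
  show "inj_on (\<lambda>X. \<Prod>X) (Pow (prime_factors m))"
  proof (rule inj_onI)
    fix X Y assume "X \<in> Pow (prime_factors m)" "Y \<in> Pow (prime_factors m)" "\<Prod>X = \<Prod>Y"
    thus "X = Y" using prod_primes_props(1)[OF _ m] by (metis PowD)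
  qed
  show "(\<lambda>X. \<Prod>X) ` Pow (prime_factors m) = {d. d dvd m \<and> squarefree d}"
  proof
    show "(\<lambda>X. \<Prod>X) ` Pow (prime_factors m) \<subseteq> {d. d dvd m \<and> squarefree d}"
      using prod_primes_props[OF _ m] by blast
    show "{d. d dvd m \<and> squarefree d} \<subseteq> (\<lambda>X. \<Prod>X) ` Pow (prime_factors m)"
    proof
      fix d assume "d \<in> {d. d dvd m \<and> squarefree d}"
      hence d: "d dvd m" "squarefree d" by auto
      have "prime_factors d \<subseteq> prime_factors m" using d(1) m by (intro dvd_prime_factors) auto
      moreover have "d = \<Prod>(prime_factors d)" using sqf_prod_prime_factors[OF d(2)] by simp
      ultimately show "d \<in> (\<lambda>X. \<Prod>X) ` Pow (prime_factors m)" by blast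
    qed
  qed
qed

lemma sum_moeb_divisors:
  fixes m :: nat and f :: "nat \<Rightarrow> 'a::comm_ring_1"
  assumes m: "m > 0"
  shows "(\<Sum>d\<in>{d. d dvd m}. of_int (moeb d) * f d) = (\<Sum>X\<in>Pow (prime_factors m). (-1) ^ card X * f (\<Prod>X))"
proof -
  have fin: "finite {d. d dvd m}" using m by simp
  have "(\<Sum>d\<in>{d. d dvd m}. of_int (moeb d) * f d) = (\<Sum>d\<in>{d. d dvd m \<and> squarefree d}. of_int (moeb d) * f d)"
    using fin by (intro sum.mono_neutral_right) (auto simp: moeb_def)
  also have "\<dots> = (\<Sum>X\<in>Pow (prime_factors m). of_int (moeb (\<Prod>X)) * f (\<Prod>X))"
    using sum.reindex_bij_betw[OF sqf_divisors_bij[OF m], of "\<lambda>d. of_int (moeb d) * f d"] by simp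
  also have "\<dots> = (\<Sum>X\<in>Pow (prime_factors m). (-1) ^ card X * f (\<Prod>X))"
  proof (rule sum.cong[OF refl])
    fix X assume "X \<in> Pow (prime_factors m)"
    hence "X \<subseteq> prime_factors m" by auto
    thus "of_int (moeb (\<Prod>X)) * f (\<Prod>X) = (-1) ^ card X * f (\<Prod>X)"
      using prod_primes_props[OF _ m] unfolding moeb_def by simp
  qed
  finally show ?thesis .
qed

lemma sum_pow_neg1_card:
  assumes "finite A"
  shows "(\<Sum>X\<in>Pow A. (-1::'a::comm_ring_1) ^ card X) = (if A = {} then 1 else 0)"
proof -
  have "(\<Prod>x\<in>A. (1::'a) - 1) = (\<Sum>X\<in>Pow A. (-1) ^ card X * (\<Prod>x\<in>X. 1) * (\<Prod>x\<in>A-X. 1))"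
    by (rule prod_diff_conv_sum[OF assms])
  thus ?thesis using assms by (simp add: power_0_left card_0_eq)
qed

lemma moeb_sum:
  fixes m :: nat
  assumes m: "m > 0"
  shows "(\<Sum>d\<in>{d. d dvd m}. (of_int (moeb d) :: 'a::comm_ring_1)) = (if m = 1 then 1 else 0)"
proof -
  have "(\<Sum>d\<in>{d. d dvd m}. (of_int (moeb d) :: 'a)) = (\<Sum>d\<in>{d. d dvd m}. of_int (moeb d) * (\<lambda>_. 1::'a) d)"
    by simp
  also have "\<dots> = (\<Sum>X\<in>Pow (prime_factors m). (-1) ^ card X * 1)"
    by (rule sum_moeb_divisors[OF m])
  also have "\<dots> = (if prime_factors m = {} then 1 else 0)"
    using sum_pow_neg1_card[of "prime_factors m"] by simp
  also have "(prime_factors m = {}) \<longleftrightarrow> m = 1"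
    using m by (auto simp: prime_factorization_empty_iff)
  finally show ?thesis .
qed


definition Gs :: "nat \<Rightarrow> (nat \<Rightarrow> complex) \<Rightarrow> nat \<Rightarrow> nat \<Rightarrow> complex" where
  "Gs q c n l = (\<Sum>h\<in>{h. h < l * q \<and> coprime h (l * q)}. c h * e_mod (l * q) (of_nat (h * n)))"

lemma block_sum_multiples:
  assumes dc: "dirichlet_char q c" and e: "e > 0"
  shows "(\<Sum>h\<in>{h. h < (e * L) * q \<and> e dvd h}. c h * e_mod ((e * L) * q) (of_nat (h * n)))
      = c e * Fs q c n L"
proof -
  have set: "{h. h < (e * L) * q \<and> e dvd h} = (\<lambda>j. e * j) ` {..<L * q}"
  proof
    show "{h. h < (e * L) * q \<and> e dvd h} \<subseteq> (\<lambda>j. e * j) ` {..<L * q}"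
    proof
      fix h assume "h \<in> {h. h < (e * L) * q \<and> e dvd h}"
      then obtain j where j: "h = e * j" "e * j < e * (L * q)" by (auto simp: ac_simps)
      hence "j < L * q" using e by simp
      thus "h \<in> (\<lambda>j. e * j) ` {..<L * q}" using j by auto
    qed
    show "(\<lambda>j. e * j) ` {..<L * q} \<subseteq> {h. h < (e * L) * q \<and> e dvd h}"
      using e by (auto simp: ac_simps)
  qed
  have inj: "inj_on (\<lambda>j. e * j) {..<L * q}" using e by (auto intro: inj_onI)
  have "(\<Sum>h\<in>{h. h < (e * L) * q \<and> e dvd h}. c h * e_mod ((e * L) * q) (of_nat (h * n)))
      = (\<Sum>j<L * q. c (e * j) * e_mod ((e * L) * q) (of_nat (e * j * n)))"
    unfolding set by (simp add: sum.reindex[OF inj])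
  also have "\<dots> = (\<Sum>j<L * q. c e * (c j * e_mod (L * q) (of_nat (j * n))))"
  proof (rule sum.cong[OF refl])
    fix j
    have "e_mod (e * (L * q)) (of_nat (e * (j * n))) = e_mod (L * q) (of_nat (j * n))"
      by (rule e_mod_scale[OF e])
    thus "c (e * j) * e_mod ((e * L) * q) (of_nat (e * j * n)) = c e * (c j * e_mod (L * q) (of_nat (j * n)))"
      by (simp add: dc_props(2)[OF dc] ac_simps)
  qed
  also have "\<dots> = c e * Fs q c n L" unfolding Fs_def by (simp add: sum_distrib_left)
  finally show ?thesis .
qed

lemma G_formula:
  assumes dc: "dirichlet_char q c" and l: "l > 0"
  shows "Gs q c n l = (\<Sum>e\<in>{e. e dvd l}. of_int (moeb e) * c e * Fs q c n (l div e))"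
proof -
  define E where "E h = c h * e_mod (l * q) (of_nat (h * n))" for h
  have finD: "finite {e. e dvd l}" using l by simp
  have "Gs q c n l = (\<Sum>h\<in>{h \<in> {..<l * q}. coprime h (l * q)}. E h)"
    unfolding Gs_def E_def by (intro sum.cong) auto
  also have "\<dots> = (\<Sum>h<l * q. if coprime h (l * q) then E h else 0)"
    by (rule sum.inter_filter) simp
  also have "\<dots> = (\<Sum>h<l * q. if coprime h l then E h else 0)"
  proof (rule sum.cong[OF refl])
    fix h
    have "c h = 0" if "\<not> coprime h q" using dc_props(4)[OF dc] that by blast
    thus "(if coprime h (l * q) then E h else 0) = (if coprime h l then E h else 0)"
      unfolding E_def by auto
  qed
  also have "\<dots> = (\<Sum>h<l * q. \<Sum>e\<in>{e. e dvd l}. if e dvd h then of_int (moeb e) * E h else 0)"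
  proof (rule sum.cong[OF refl])
    fix h
    have g0: "gcd h l > 0" using l by simp
    have "(\<Sum>e\<in>{e. e dvd l}. if e dvd h then of_int (moeb e) * E h else 0)
        = (\<Sum>e\<in>{e \<in> {e. e dvd l}. e dvd h}. of_int (moeb e) * E h)"
      by (rule sum.inter_filter[symmetric]) (rule finD)
    also have "{e \<in> {e. e dvd l}. e dvd h} = {e. e dvd gcd h l}" by auto
    also have "(\<Sum>e\<in>{e. e dvd gcd h l}. of_int (moeb e) * E h) = (\<Sum>e\<in>{e. e dvd gcd h l}. of_int (moeb e)) * E h"
      by (simp add: sum_distrib_right)
    also have "\<dots> = (if gcd h l = 1 then 1 else 0) * E h" by (simp only: moeb_sum[OF g0])
    finally have calc: "(\<Sum>e\<in>{e. e dvd l}. if e dvd h then of_int (moeb e) * E h else 0) = (if gcd h l = 1 then 1 else 0) * E h" .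
    have iff: "coprime h l \<longleftrightarrow> gcd h l = 1" by (rule coprime_iff_gcd_eq_1)
    show "(if coprime h l then E h else 0) = (\<Sum>e\<in>{e. e dvd l}. if e dvd h then of_int (moeb e) * E h else 0)"
    proof (cases "gcd h l = 1")
      case True
      hence "coprime h l" using iff by blast
      thus ?thesis unfolding calc using True by simp
    next
      case False
      hence "\<not> coprime h l" using iff by blast
      thus ?thesis unfolding calc using False by simp
    qed
  qed
  also have "\<dots> = (\<Sum>e\<in>{e. e dvd l}. \<Sum>h<l * q. if e dvd h then of_int (moeb e) * E h else 0)"
    by (rule sum.swap)
  also have "\<dots> = (\<Sum>e\<in>{e. e dvd l}. of_int (moeb e) * (\<Sum>h\<in>{h. h < l * q \<and> e dvd h}. E h))"
  proof (rule sum.cong[OF refl])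
    fix e
    have "(\<Sum>h<l * q. if e dvd h then of_int (moeb e) * E h else 0) = (\<Sum>h\<in>{h \<in> {..<l * q}. e dvd h}. of_int (moeb e) * E h)"
      by (rule sum.inter_filter[symmetric]) simp
    also have "{h \<in> {..<l * q}. e dvd h} = {h. h < l * q \<and> e dvd h}" by auto
    finally show "(\<Sum>h<l * q. if e dvd h then of_int (moeb e) * E h else 0) = of_int (moeb e) * (\<Sum>h\<in>{h. h < l * q \<and> e dvd h}. E h)"
      by (simp add: sum_distrib_left)
  qed
  also have "\<dots> = (\<Sum>e\<in>{e. e dvd l}. of_int (moeb e) * c e * Fs q c n (l div e))"
  proof (rule sum.cong[OF refl])
    fix e assume "e \<in> {e. e dvd l}"
    hence el: "e dvd l" by simp
    hence e0: "e > 0" using l by (cases e) auto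
    have "(\<Sum>h\<in>{h. h < l * q \<and> e dvd h}. E h) = c e * Fs q c n (l div e)"
      using block_sum_multiples[OF dc e0, of "l div e" n] el unfolding E_def by (simp only: dvd_mult_div_cancel)
    thus "of_int (moeb e) * (\<Sum>h\<in>{h. h < l * q \<and> e dvd h}. E h) = of_int (moeb e) * c e * Fs q c n (l div e)"
      by simp
  qed
  finally show ?thesis .
qed



definition ds :: "(nat \<Rightarrow> complex) \<Rightarrow> complex \<Rightarrow> nat \<Rightarrow> complex" where
  "ds a s n = a n / of_nat n powr s"

lemma ds_0 [simp]: "ds a s 0 = 0"
  unfolding ds_def by simp

lemma powr_nat_mult: "(of_nat (d * m) :: complex) powr s = of_nat d powr s * of_nat m powr s"
proof -
  have "(of_nat d * of_nat m :: complex) powr s = of_nat d powr s * of_nat m powr s"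
    by (rule powr_times_real) auto
  thus ?thesis by simp
qed

lemma dirichlet_product:
  fixes a b :: "nat \<Rightarrow> complex"
  assumes A: "ds a s abs_summable_on UNIV" and B: "ds b s abs_summable_on UNIV"
  shows "ds (\<lambda>l. \<Sum>d\<in>{d. d dvd l}. a d * b (l div d)) s abs_summable_on UNIV"
    and "infsetsum (ds (\<lambda>l. \<Sum>d\<in>{d. d dvd l}. a d * b (l div d)) s) UNIV
         = infsetsum (ds a s) UNIV * infsetsum (ds b s) UNIV"
proof -
  define cv where "cv l = (\<Sum>d\<in>{d. d dvd l}. a d * b (l div d))" for l
  define P where "P = (\<lambda>(x, y). ds a s x * ds b s y)"
  have P1: "P abs_summable_on UNIV \<times> UNIV"
    unfolding P_def using abs_summable_on_product[OF _ _ A B] by simp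
  have P2: "infsetsum P (UNIV \<times> UNIV) = infsetsum (ds a s) UNIV * infsetsum (ds b s) UNIV"
    unfolding P_def using infsetsum_product[OF _ _ A B] by simp
  define S where "S = {(d, m). d > (0::nat) \<and> m > (0::nat)}"
  have Pz: "P x = 0" if "x \<notin> S" for x
    using that unfolding P_def S_def by (cases x) auto
  have PS1: "P abs_summable_on S" using abs_summable_on_subset[OF P1] by simp
  have PS2: "infsetsum P S = infsetsum P (UNIV \<times> UNIV)"
    by (rule infsetsum_cong_neutral) (auto simp: Pz)
  define T where "T = Sigma {l. l > (0::nat)} (\<lambda>l. {d. d dvd l})"
  define g :: "nat \<times> nat \<Rightarrow> nat \<times> nat" where "g = (\<lambda>(l, d). (d, l div d))"
  have bij: "bij_betw g T S"
  proof (rule bij_betw_byWitness[where f' = "\<lambda>(d, m). (d * m, d)"])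
    show "\<forall>x\<in>T. (\<lambda>(d, m). (d * m, d)) (g x) = x" unfolding T_def g_def by auto
    show "\<forall>y\<in>S. g ((\<lambda>(d, m). (d * m, d)) y) = y" unfolding S_def g_def by auto
    show "g ` T \<subseteq> S"
    proof
      fix y assume "y \<in> g ` T"
      then obtain l d where y: "y = (d, l div d)" and l: "l > 0" and dl: "d dvd l"
        unfolding T_def g_def by auto
      have "d * (l div d) = l" using dl by simp
      hence "d \<noteq> 0 \<and> l div d \<noteq> 0" using l by (metis mult_is_0 not_gr0)
      thus "y \<in> S" unfolding S_def y by simp
    qed
    show "(\<lambda>(d, m). (d * m, d)) ` S \<subseteq> T" unfolding T_def S_def by auto
  qed
  define Q where "Q = (\<lambda>(l, d). a d * b (l div d) / of_nat l powr s)"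
  have PQ: "P (g x) = Q x" if xT: "x \<in> T" for x
  proof -
    obtain l d where x: "x = (l, d)" and dl: "d dvd l" and l: "l > 0" using xT unfolding T_def by auto
    have "l = d * (l div d)" using dl by simp
    hence "of_nat l powr s = (of_nat d powr s * of_nat (l div d) powr s :: complex)"
      by (metis powr_nat_mult)
    thus ?thesis unfolding P_def Q_def g_def ds_def x by simp
  qed
  have QT1: "Q abs_summable_on T"
  proof -
    have "(\<lambda>x. P (g x)) abs_summable_on T" using abs_summable_on_reindex_bij_betw[OF bij] PS1 by blast
    thus ?thesis using PQ by (subst abs_summable_on_cong[of T Q "\<lambda>x. P (g x)" T]) auto
  qed
  have QT2: "infsetsum Q T = infsetsum P S"
  proof -
    have "infsetsum Q T = infsetsum (\<lambda>x. P (g x)) T" using PQ by (intro infsetsum_cong) auto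
    also have "\<dots> = infsetsum P S" by (rule infsetsum_reindex_bij_betw[OF bij])
    finally show ?thesis .
  qed
  have inner: "infsetsum (\<lambda>d. Q (l, d)) {d. d dvd l} = ds cv s l" if "l > 0" for l
  proof -
    have fin: "finite {d. d dvd l}" using that by simp
    show ?thesis unfolding Q_def ds_def cv_def using fin by (simp add: sum_divide_distrib)
  qed
  have QT1': "(\<lambda>(l, d). Q (l, d)) abs_summable_on T" using QT1 by simp
  have R1: "(\<lambda>l. infsetsum (\<lambda>d. Q (l, d)) {d. d dvd l}) abs_summable_on {l. l > 0}"
    using abs_summable_on_Sigma_project1'[of "\<lambda>l d. Q (l, d)", OF QT1'[unfolded T_def]] by simp
  have R2: "infsetsum Q T = infsetsum (\<lambda>l. infsetsum (\<lambda>d. Q (l, d)) {d. d dvd l}) {l. l > 0}"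
    unfolding T_def by (rule infsetsum_Sigma) (use QT1 in \<open>auto simp: T_def\<close>)
  have "ds cv s abs_summable_on {l. l > 0}"
    using R1 inner by (subst abs_summable_on_cong[of "{l. l > 0}" _ "\<lambda>l. infsetsum (\<lambda>d. Q (l, d)) {d. d dvd l}"]) auto
  hence "ds cv s abs_summable_on insert 0 {l. l > 0}" by simp
  moreover have "insert 0 {l. l > 0} = (UNIV :: nat set)" by auto
  ultimately show "ds (\<lambda>l. \<Sum>d\<in>{d. d dvd l}. a d * b (l div d)) s abs_summable_on UNIV"
    unfolding cv_def by simp
  have "infsetsum (ds cv s) UNIV = infsetsum (ds cv s) {l. l > 0}"
    by (rule infsetsum_cong_neutral) auto
  also have "\<dots> = infsetsum (\<lambda>l. infsetsum (\<lambda>d. Q (l, d)) {d. d dvd l}) {l. l > 0}"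
    using inner by (intro infsetsum_cong) auto
  also have "\<dots> = infsetsum (ds a s) UNIV * infsetsum (ds b s) UNIV"
    using R2 QT2 PS2 P2 by simp
  finally show "infsetsum (ds (\<lambda>l. \<Sum>d\<in>{d. d dvd l}. a d * b (l div d)) s) UNIV
         = infsetsum (ds a s) UNIV * infsetsum (ds b s) UNIV" unfolding cv_def .
qed



lemma norm_nat_powr: "norm ((of_nat n :: complex) powr s) = real n powr Re s"
  using norm_powr_real_powr[of "of_nat n" s] by simp

lemma ds_abs_summable:
  assumes s: "Re s > 1" and B: "\<And>n. norm (a n) \<le> B"
  shows "ds a s abs_summable_on UNIV"
proof -
  have sg: "summable (\<lambda>n. B * real n powr (- Re s))"
    using summable_real_powr_iff[of "- Re s"] s by (intro summable_mult) simp
  have bnd: "norm (norm (ds a s n)) \<le> B * real n powr (- Re s)" for n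
  proof (cases "n = 0")
    case True thus ?thesis by simp
  next
    case False
    have "norm (ds a s n) = norm (a n) / real n powr Re s"
      unfolding ds_def by (simp add: norm_divide norm_nat_powr)
    also have "\<dots> \<le> B / real n powr Re s"
      by (rule divide_right_mono[OF B]) simp
    also have "\<dots> = B * real n powr (- Re s)" by (simp add: powr_minus_divide)
    finally show ?thesis by simp
  qed
  have "summable (\<lambda>n. norm (ds a s n))"
    by (rule summable_comparison_test'[OF sg, of 0]) (rule bnd)
  thus ?thesis by (simp add: abs_summable_on_nat_iff')
qed

lemma divisor_flip_sum:
  fixes l :: nat and f :: "nat \<Rightarrow> 'a::comm_monoid_add"
  assumes l: "l > 0"
  shows "(\<Sum>d\<in>{d. d dvd l}. f (l div d)) = (\<Sum>d\<in>{d. d dvd l}. f d)"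
proof -
  have h: "l div (l div d) = d \<and> (l div d) dvd l" if dl: "d dvd l" for d
  proof -
    obtain k where k: "l = d * k" using dl by auto
    have d0: "d > 0" "k > 0" using l k by auto
    show ?thesis using k d0 by simp
  qed
  show ?thesis
    by (rule sum.reindex_bij_witness[where i = "\<lambda>d. l div d" and j = "\<lambda>d. l div d"]) (use h in auto)
qed

lemma infsetsum_ds_finite:
  assumes "finite A" and "\<And>l. l \<notin> A \<Longrightarrow> ds a s l = 0"
  shows "infsetsum (ds a s) UNIV = (\<Sum>l\<in>A. ds a s l)"
proof -
  have "infsetsum (ds a s) UNIV = infsetsum (ds a s) A"
    using assms(2) by (intro infsetsum_cong_neutral) auto
  thus ?thesis using assms(1) by simp
qed

lemma infsetsum_nat_shift:
  assumes "f abs_summable_on UNIV" "f 0 = 0"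
  shows "summable (\<lambda>n. f (Suc n))" "(\<Sum>n. f (Suc n)) = infsetsum f UNIV"
proof -
  have "summable (\<lambda>n. norm (f n))" using assms(1) by (simp add: abs_summable_on_nat_iff')
  hence sf: "summable f" by (rule summable_norm_cancel)
  thus "summable (\<lambda>n. f (Suc n))" by (simp add: summable_Suc_iff)
  show "(\<Sum>n. f (Suc n)) = infsetsum f UNIV"
    using suminf_split_head[OF sf] assms infsetsum_nat'[OF assms(1)] by simp
qed



theorem lemma2p2:
  fixes q n :: nat and \<psi> :: "nat \<Rightarrow> complex" and \<xi> :: complex
  assumes "primitive_dirichlet_char q \<psi>"
    and "n > 0"
    and "Re \<xi> > 0"
  shows "summable (\<lambda>l. 1 / of_nat (Suc l) powr (1 + \<xi>) *
             (\<Sum>h\<in>{h. h < Suc l * q \<and> coprime h (Suc l * q)}.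
                 cnj (\<psi> h) * e_mod (Suc l * q) (of_nat (h * n))))
       \<and> twisted_sigma \<xi> n \<psi> / of_nat n powr \<xi> =
         dirichlet_L (\<lambda>m. cnj (\<psi> m)) (1 + \<xi>) / gauss_sum q (\<lambda>m. cnj (\<psi> m)) *
         (\<Sum>l. 1 / of_nat (Suc l) powr (1 + \<xi>) *
             (\<Sum>h\<in>{h. h < Suc l * q \<and> coprime h (Suc l * q)}.
                 cnj (\<psi> h) * e_mod (Suc l * q) (of_nat (h * n))))"
proof -
  define c where "c = (\<lambda>m. cnj (\<psi> m))"
  define s where "s = 1 + \<xi>"
  have prim: "primitive_dirichlet_char q c" unfolding c_def by (rule primitive_cnj[OF assms(1)])
  have dc: "dirichlet_char q c" using prim unfolding primitive_dirichlet_char_def by blast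
  have s1: "Re s > 1" using assms(3) unfolding s_def by simp
  define tau where "tau = gauss_sum q c"
  have tau0: "tau \<noteq> 0" unfolding tau_def by (rule gauss_nonzero[OF prim])
  define mc where "mc d = of_int (moeb d) * c d" for d
  define F where "F = Fs q c n"
  define G where "G = Gs q c n"
  have cb: "norm (c m) \<le> 1" for m by (rule dc_norm_le[OF dc])
  have mcb: "norm (mc m) \<le> 1" for m
  proof -
    have "norm (mc m) = real_of_int \<bar>moeb m\<bar> * norm (c m)"
      unfolding mc_def by (simp add: norm_mult)
    also have "\<dots> \<le> 1 * 1"
      using moeb_abs_le[of m] cb[of m] by (intro mult_mono) auto
    finally show ?thesis by simp
  qed
  have Fb: "norm (F l) \<le> norm tau * real n" for l
  proof (cases "l = 0")
    case True thus ?thesis unfolding F_def Fs_def by simp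
  next
    case False
    hence l: "l > 0" by simp
    show ?thesis
    proof (cases "l dvd n")
      case True
      have "norm (F l) = norm tau * real l * norm (c (n div l))"
        unfolding F_def F_formula[OF prim l] tau_def using True by (simp add: norm_mult)
      also have "\<dots> \<le> norm tau * real l * 1"
        using cb by (intro mult_left_mono) auto
      also have "\<dots> \<le> norm tau * real n"
        using dvd_imp_le[OF True assms(2)] by (simp add: mult_left_mono)
      finally show ?thesis .
    next
      case False thus ?thesis unfolding F_def F_formula[OF prim l] by simp
    qed
  qed
  have Ac: "ds c s abs_summable_on UNIV" by (rule ds_abs_summable[OF s1 cb])
  have Amc: "ds mc s abs_summable_on UNIV" by (rule ds_abs_summable[OF s1 mcb])
  have AF: "ds F s abs_summable_on UNIV" by (rule ds_abs_summable[OF s1 Fb])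
  define Lv where "Lv = infsetsum (ds c s) UNIV"
  define Mv where "Mv = infsetsum (ds mc s) UNIV"
  define Fv where "Fv = infsetsum (ds F s) UNIV"
  define Gv where "Gv = infsetsum (ds G s) UNIV"
  have cvG: "ds (\<lambda>l. \<Sum>d\<in>{d. d dvd l}. mc d * F (l div d)) s = ds G s"
  proof
    fix l show "ds (\<lambda>l. \<Sum>d\<in>{d. d dvd l}. mc d * F (l div d)) s l = ds G s l"
    proof (cases "l = 0")
      case True thus ?thesis by simp
    next
      case False
      hence "G l = (\<Sum>d\<in>{d. d dvd l}. mc d * F (l div d))"
        unfolding G_def F_def mc_def using G_formula[OF dc] by simp
      thus ?thesis unfolding ds_def by simp
    qed
  qed
  have AG: "ds G s abs_summable_on UNIV" using dirichlet_product(1)[OF Amc AF] cvG by simp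
  have GMF: "Gv = Mv * Fv"
    using dirichlet_product(2)[OF Amc AF] cvG unfolding Gv_def Mv_def Fv_def by simp
  have cv2: "ds (\<lambda>l. \<Sum>d\<in>{d. d dvd l}. c d * mc (l div d)) s l = (if l = 1 then 1 else 0)" for l
  proof (cases "l = 0")
    case True thus ?thesis by simp
  next
    case False
    hence l: "l > 0" by simp
    have "(\<Sum>d\<in>{d. d dvd l}. c d * mc (l div d)) = (\<Sum>d\<in>{d. d dvd l}. c l * of_int (moeb (l div d)))"
    proof (rule sum.cong[OF refl])
      fix d assume "d \<in> {d. d dvd l}"
      hence "d * (l div d) = l" by simp
      hence "c d * c (l div d) = c l" using dc_props(2)[OF dc, of d "l div d"] by simp
      thus "c d * mc (l div d) = c l * of_int (moeb (l div d))"
        unfolding mc_def by (metis mult.assoc mult.commute)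
    qed
    also have "\<dots> = c l * (\<Sum>d\<in>{d. d dvd l}. of_int (moeb (l div d)))"
      by (simp add: sum_distrib_left)
    also have "(\<Sum>d\<in>{d. d dvd l}. (of_int (moeb (l div d)) :: complex)) = (\<Sum>d\<in>{d. d dvd l}. of_int (moeb d))"
      by (rule divisor_flip_sum[OF l])
    also have "\<dots> = (if l = 1 then 1 else 0)" by (rule moeb_sum[OF l])
    finally have "(\<Sum>d\<in>{d. d dvd l}. c d * mc (l div d)) = c l * (if l = 1 then 1 else 0)" .
    thus ?thesis unfolding ds_def using dc_1[OF dc] by auto
  qed
  have LM: "Lv * Mv = 1"
  proof -
    have "Lv * Mv = infsetsum (ds (\<lambda>l. \<Sum>d\<in>{d. d dvd l}. c d * mc (l div d)) s) UNIV"
      unfolding Lv_def Mv_def using dirichlet_product(2)[OF Ac Amc] by simp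
    also have "\<dots> = (\<Sum>l\<in>{1}. ds (\<lambda>l. \<Sum>d\<in>{d. d dvd l}. c d * mc (l div d)) s l)"
      by (rule infsetsum_ds_finite) (auto simp: cv2)
    also have "\<dots> = 1" using cv2[of 1] by simp
    finally show ?thesis .
  qed
  have Fv_eq: "Fv = tau * (twisted_sigma \<xi> n \<psi> / of_nat n powr \<xi>)"
  proof -
    have fin: "finite {l. l dvd n}" using assms(2) by simp
    have "Fv = (\<Sum>l\<in>{l. l dvd n}. ds F s l)"
      unfolding Fv_def
    proof (rule infsetsum_ds_finite[OF fin])
      fix l assume "l \<notin> {l. l dvd n}"
      thus "ds F s l = 0"
        using F_formula[OF prim, of l n] unfolding F_def ds_def by (cases "l = 0") auto
    qed
    also have "\<dots> = (\<Sum>l\<in>{l. l dvd n}. tau * (\<psi> (n div l) * of_nat (n div l) powr \<xi> / of_nat n powr \<xi>))"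
    proof (rule sum.cong[OF refl])
      fix l assume "l \<in> {l. l dvd n}"
      hence ln: "l dvd n" by simp
      hence l: "l > 0" using assms(2) by (cases l) auto
      define k where "k = n div l"
      have nk: "n = k * l" unfolding k_def using ln by simp
      have k0: "k > 0" using nk assms(2) by (cases k) auto
      have pn: "(of_nat n :: complex) powr \<xi> = of_nat k powr \<xi> * of_nat l powr \<xi>"
        unfolding nk by (rule powr_nat_mult)
      have ps: "(of_nat l :: complex) powr s = of_nat l * of_nat l powr \<xi>"
        unfolding s_def by (simp add: powr_add)
      have nz1: "(of_nat k :: complex) powr \<xi> \<noteq> 0" using k0 by simp
      have nz2: "(of_nat l :: complex) powr \<xi> \<noteq> 0" using l by simp
      have Fl: "F l = tau * of_nat l * cnj (c k)"
        unfolding F_def F_formula[OF prim l] tau_def k_def using ln by simp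
      have "ds F s l = tau * of_nat l * \<psi> k / (of_nat l * of_nat l powr \<xi>)"
        unfolding ds_def Fl ps by (simp add: c_def)
      also have "\<dots> = tau * (\<psi> k * of_nat k powr \<xi> / (of_nat k powr \<xi> * of_nat l powr \<xi>))"
        using nz1 nz2 l by (simp add: field_simps)
      finally show "ds F s l = tau * (\<psi> (n div l) * of_nat (n div l) powr \<xi> / of_nat n powr \<xi>)"
        unfolding pn k_def .
    qed
    also have "\<dots> = tau * ((\<Sum>l\<in>{l. l dvd n}. \<psi> (n div l) * of_nat (n div l) powr \<xi>) / of_nat n powr \<xi>)"
      by (simp add: sum_distrib_left sum_divide_distrib)
    also have "(\<Sum>l\<in>{l. l dvd n}. \<psi> (n div l) * of_nat (n div l) powr \<xi>) = twisted_sigma \<xi> n \<psi>"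
      unfolding twisted_sigma_def using divisor_flip_sum[OF assms(2), of "\<lambda>d. \<psi> d * of_nat d powr \<xi>"] by simp
    finally show ?thesis .
  qed
  have ser: "(\<lambda>l. 1 / of_nat (Suc l) powr (1 + \<xi>) *
             (\<Sum>h\<in>{h. h < Suc l * q \<and> coprime h (Suc l * q)}.
                 cnj (\<psi> h) * e_mod (Suc l * q) (of_nat (h * n)))) = (\<lambda>l. ds G s (Suc l))"
    unfolding ds_def G_def Gs_def c_def s_def by (simp add: field_simps)
  have Lconv: "dirichlet_L (\<lambda>m. cnj (\<psi> m)) (1 + \<xi>) = Lv"
  proof -
    have "dirichlet_L (\<lambda>m. cnj (\<psi> m)) (1 + \<xi>) = (\<Sum>m. ds c s (Suc m))"
      unfolding dirichlet_L_def ds_def c_def s_def ..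
    also have "\<dots> = Lv" unfolding Lv_def by (rule infsetsum_nat_shift(2)[OF Ac ds_0])
    finally show ?thesis .
  qed
  have Gconv: "(\<Sum>l. ds G s (Suc l)) = Gv" unfolding Gv_def by (rule infsetsum_nat_shift(2)[OF AG ds_0])
  have summ: "summable (\<lambda>l. ds G s (Suc l))" by (rule infsetsum_nat_shift(1)[OF AG ds_0])
  have "twisted_sigma \<xi> n \<psi> / of_nat n powr \<xi> = Fv / tau" using Fv_eq tau0 by simp
  also have "\<dots> = Lv / tau * Gv" using GMF LM by (simp add: field_simps)
  finally have main: "twisted_sigma \<xi> n \<psi> / of_nat n powr \<xi> = Lv / tau * Gv" .
  show ?thesis
    unfolding ser Lconv Gconv
    using summ main unfolding tau_def c_def by simp
qed


end
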